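(* Let $n\geq1$ and let $\mathcal{M}_n$ be the structure defined below. (i) For every automorphism $\sigma$ of $\mathcal{M}_n$ fixing $P$ pointwise there is a unique additive map $F_\sigma:\mathbb{C}\to\mathbb{C}$ with $\sigma(x)=F_\sigma(\pi(x))\star x$ for all $x\in S$, and $\sigma\mapsto F_\sigma$ is a bijection from $\mathrm{Aut}(\mathcal{M}_n/P)$ onto $D_n$. (ii) Every relation $R_n$ is definable (with the same sorts) in the structure $\mathcal{M}_1'=(S,P,\pi,\star,\oplus,\otimes)$, where $\otimes:S\times S\to S$ is $((\alpha,a'),(\beta,b'))\mapsto(\alpha\beta,\alpha b'+\beta a')$; that is, $\mathcal{M}_n$ is a definitional reduct of $\mathcal{M}_1'$.
   Context: For $n\geq1$, $\mathcal{M}_n$ is the two-sorted structure with sort $P=\mathbb{C}$ carrying the full field structure $(\mathbb{C},+,\cdot)$, sort $S=\mathbb{C}\times\mathbb{C}$, the projection $\pi:S\to P$, $(\alpha,a')\mapsto\alpha$, the addition $\oplus$ on $S$, $((\alpha,a'),(\beta,b'))\mapsto(\alpha+\beta,a'+b')$, the action $\star$ of $P$ on $S$, $\beta\star(\alpha,a')=(\alpha,a'+\beta)$, and the $(n+1)$-ary relation $R_n$ on $S$ given by: $R_n((\alpha_1,a_1'),\ldots,(\alpha_{n+1},a_{n+1}'))$ holds iff $\alpha_i=\alpha_1^i$ for all $i\leq n+1$ and $a_{n+1}'=\sum_{i=1}^{n}\binom{n+1}{i}(-1)^{n-i}\alpha_{n+1-i}a_i'$. $D_n$ is the set of additive $F:\mathbb{C}\to\mathbb{C}$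 with $F(\alpha^{n+1})=\sum_{i=1}^{n}\binom{n+1}{i}(-1)^{n-i}\alpha^{n+1-i}F(\alpha^i)$ for all $\alpha\in\mathbb{C}$. *)

theory Defs
  imports Complex_Main
begin

text \<open>Sort S = complex \<times> complex; sort P = complex (full field structure).\<close>

type_synonym sortS = "complex \<times> complex"

definition proj :: "sortS \<Rightarrow> complex" where
  "proj x = fst x"

definition splus :: "sortS \<Rightarrow> sortS \<Rightarrow> sortS" where
  "splus x y = (fst x + fst y, snd x + snd y)"

definition act :: "complex \<Rightarrow> sortS \<Rightarrow> sortS" where
  "act \<beta> x = (fst x, snd x + \<beta>)"

definition stimes :: "sortS \<Rightarrow> sortS \<Rightarrow> sortS" where
  "stimes x y = (fst x * fst y, fst x * snd y + fst y * snd x)"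

text \<open>The (n+1)-ary relation R_n, arguments given as a list x_1,...,x_{n+1}
  (0-based list positions 0..n).\<close>
definition Rel :: "nat \<Rightarrow> sortS list \<Rightarrow> bool" where
  "Rel n xs \<longleftrightarrow> length xs = n + 1 \<and>
     (\<forall>i\<in>{1..n+1}. fst (xs ! (i - 1)) = fst (xs ! 0) ^ i) \<and>
     snd (xs ! n) = (\<Sum>i=1..n. of_nat ((n+1) choose i) * (-1) ^ (n - i)
                        * fst (xs ! (n - i)) * snd (xs ! (i - 1)))"

text \<open>Automorphisms of M_n fixing P pointwise: the P-component is the identity,
  so such an automorphism is a bijection of S preserving \<pi>, \<oplus>, \<star> and R_n.\<close>
definition AutP :: "nat \<Rightarrow> (sortS \<Rightarrow> sortS) set" where
  "AutP n = {\<sigma>. bij \<sigma> \<and>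
     (\<forall>x. proj (\<sigma> x) = proj x) \<and>
     (\<forall>x y. \<sigma> (splus x y) = splus (\<sigma> x) (\<sigma> y)) \<and>
     (\<forall>\<beta> x. \<sigma> (act \<beta> x) = act \<beta> (\<sigma> x)) \<and>
     (\<forall>xs. length xs = n + 1 \<longrightarrow> (Rel n xs \<longleftrightarrow> Rel n (map \<sigma> xs)))}"

definition additive_fun :: "(complex \<Rightarrow> complex) \<Rightarrow> bool" where
  "additive_fun F \<longleftrightarrow> (\<forall>x y. F (x + y) = F x + F y)"

definition Dn :: "nat \<Rightarrow> (complex \<Rightarrow> complex) set" where
  "Dn n = {F. additive_fun F \<and>
     (\<forall>\<alpha>. F (\<alpha> ^ (n+1)) = (\<Sum>i=1..n. of_nat ((n+1) choose i) * (-1) ^ (n - i)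
                        * \<alpha> ^ (n + 1 - i) * F (\<alpha> ^ i)))}"

definition Fsig :: "(sortS \<Rightarrow> sortS) \<Rightarrow> (complex \<Rightarrow> complex)" where
  "Fsig \<sigma> = (THE F. additive_fun F \<and> (\<forall>x. \<sigma> x = act (F (proj x)) x))"

text \<open>First-order two-sorted language of M_1' = (S, P, \<pi>, \<star>, \<oplus>, \<otimes>) with the
  field structure (+, \<cdot>) on P. Variables are indexed by nat, separately per sort.\<close>

datatype pterm = PVar nat | PAdd pterm pterm | PMul pterm pterm | PPi sterm
and sterm = SVar nat | SAdd sterm sterm | SAct pterm sterm | STimes sterm sterm

datatype fm = PEq pterm pterm | SEq sterm sterm | Neg fm | Conj fm fm
  | ExP nat fm | ExS nat fm

primrec evalP :: "(nat \<Rightarrow> complex) \<Rightarrow> (nat \<Rightarrow> sortS) \<Rightarrow> pterm \<Rightarrow> complex"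
  and evalS :: "(nat \<Rightarrow> complex) \<Rightarrow> (nat \<Rightarrow> sortS) \<Rightarrow> sterm \<Rightarrow> sortS" where
  "evalP eP eS (PVar v) = eP v"
| "evalP eP eS (PAdd s t) = evalP eP eS s + evalP eP eS t"
| "evalP eP eS (PMul s t) = evalP eP eS s * evalP eP eS t"
| "evalP eP eS (PPi u) = proj (evalS eP eS u)"
| "evalS eP eS (SVar v) = eS v"
| "evalS eP eS (SAdd s t) = splus (evalS eP eS s) (evalS eP eS t)"
| "evalS eP eS (SAct p s) = act (evalP eP eS p) (evalS eP eS s)"
| "evalS eP eS (STimes s t) = stimes (evalS eP eS s) (evalS eP eS t)"

primrec sat :: "(nat \<Rightarrow> complex) \<Rightarrow> (nat \<Rightarrow> sortS) \<Rightarrow> fm \<Rightarrow> bool" where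
  "sat eP eS (PEq s t) = (evalP eP eS s = evalP eP eS t)"
| "sat eP eS (SEq s t) = (evalS eP eS s = evalS eP eS t)"
| "sat eP eS (Neg \<phi>) = (\<not> sat eP eS \<phi>)"
| "sat eP eS (Conj \<phi> \<psi>) = (sat eP eS \<phi> \<and> sat eP eS \<psi>)"
| "sat eP eS (ExP v \<phi>) = (\<exists>a. sat (eP(v := a)) eS \<phi>)"
| "sat eP eS (ExS v \<phi>) = (\<exists>x. sat eP (eS(v := x)) \<phi>)"

end

theory Submission
  imports Defs
begin


lemma act_zero: "act b (a, 0) = (a, b)" by (simp add: act_def)

lemma aut_form:
  assumes "\<sigma> \<in> AutP n"
  shows "\<sigma> x = act (snd (\<sigma> (fst x, 0))) x"
proof -
  have p0: "\<forall>x. proj (\<sigma> x) = proj x" using assms unfolding AutP_def by blast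
  have p: "\<And>x. fst (\<sigma> x) = fst x" using p0 unfolding proj_def by blast
  have a: "\<And>b x. \<sigma> (act b x) = act b (\<sigma> x)" using assms unfolding AutP_def by blast
  have "\<sigma> x = \<sigma> (act (snd x) (fst x, 0))" by (simp add: act_def)
  also have "\<dots> = act (snd x) (\<sigma> (fst x, 0))" by (rule a)
  finally show ?thesis using p[of "(fst x, 0)"] by (simp add: act_def prod_eq_iff)
qed

lemma aut_add:
  assumes "\<sigma> \<in> AutP n"
  shows "additive_fun (\<lambda>a. snd (\<sigma> (a, 0)))"
  unfolding additive_fun_def
proof (intro allI)
  fix x y
  have "\<sigma> (splus (x,0) (y,0)) = splus (\<sigma> (x,0)) (\<sigma> (y,0))" using assms unfolding AutP_def by blast
  then show "snd (\<sigma> (x + y, 0)) = snd (\<sigma> (x, 0)) + snd (\<sigma> (y, 0))"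
    by (simp add: splus_def)
qed

lemma uniq_F:
  assumes "\<forall>x. \<sigma> x = act (G (proj x)) x"
  shows "G = (\<lambda>a. snd (\<sigma> (a, 0)))"
proof
  fix a show "G a = snd (\<sigma> (a, 0))" using assms[rule_format, of "(a,0)"] by (simp add: act_def proj_def)
qed

lemma aut_Fsig:
  assumes "\<sigma> \<in> AutP n"
  shows "Fsig \<sigma> = (\<lambda>a. snd (\<sigma> (a, 0)))" "additive_fun (Fsig \<sigma>)"
    "\<forall>x. \<sigma> x = act (Fsig \<sigma> (proj x)) x"
proof -
  have ex: "additive_fun (\<lambda>a. snd (\<sigma> (a, 0))) \<and> (\<forall>x. \<sigma> x = act ((\<lambda>a. snd (\<sigma> (a, 0))) (proj x)) x)"
  proof
    show "additive_fun (\<lambda>a. snd (\<sigma> (a, 0)))" by (rule aut_add[OF assms])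
    show "\<forall>x. \<sigma> x = act ((\<lambda>a. snd (\<sigma> (a, 0))) (proj x)) x"
    proof
      fix x show "\<sigma> x = act ((\<lambda>a. snd (\<sigma> (a, 0))) (proj x)) x"
        by (simp only: proj_def) (rule aut_form[OF assms])
    qed
  qed
  show 1: "Fsig \<sigma> = (\<lambda>a. snd (\<sigma> (a, 0)))" unfolding Fsig_def
    by (rule the_equality, rule ex, use uniq_F in blast)
  show "additive_fun (Fsig \<sigma>)" by (simp only: 1) (rule aut_add[OF assms])
  show "\<forall>x. \<sigma> x = act (Fsig \<sigma> (proj x)) x"
  proof
    fix x show "\<sigma> x = act (Fsig \<sigma> (proj x)) x"
      by (simp only: 1 proj_def) (rule aut_form[OF assms])
  qed
qed

lemma aut_Dn:
  assumes "\<sigma> \<in> AutP n"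
  shows "(\<lambda>a. snd (\<sigma> (a, 0))) \<in> Dn n"
proof -
  let ?F = "\<lambda>a. snd (\<sigma> (a, 0))"
  have p0: "\<forall>x. proj (\<sigma> x) = proj x" using assms unfolding AutP_def by blast
  have p: "\<And>x. fst (\<sigma> x) = fst x" using p0 unfolding proj_def by blast
  have R: "\<And>xs. length xs = n + 1 \<Longrightarrow> Rel n xs \<longleftrightarrow> Rel n (map \<sigma> xs)" using assms unfolding AutP_def by blast
  have "\<forall>\<alpha>. ?F (\<alpha> ^ (n+1)) = (\<Sum>i=1..n. of_nat ((n+1) choose i) * (-1) ^ (n - i)
                        * \<alpha> ^ (n + 1 - i) * ?F (\<alpha> ^ i))"
  proof
    fix \<alpha> :: complex
    define xs where "xs = map (\<lambda>j. (\<alpha> ^ (j+1), 0::complex)) [0..<n+1]"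
    have len: "length xs = n + 1" by (simp add: xs_def)
    have nth: "\<And>j. j \<le> n \<Longrightarrow> xs ! j = (\<alpha> ^ (j+1), 0)" 
      unfolding xs_def by (subst nth_map) (auto simp del: upt_Suc)
    have "Rel n xs" unfolding Rel_def
    proof (intro conjI ballI)
      fix i assume "i \<in> {1..n+1}"
      then have "i - 1 \<le> n" "i - 1 + 1 = i" by auto
      then show "fst (xs ! (i - 1)) = fst (xs ! 0) ^ i" using nth[of 0] nth[of "i - 1"] by simp
    next
      have "\<And>i. i \<in> {1..n} \<Longrightarrow> snd (xs ! (i - 1)) = 0" using nth by auto
      then show "snd (xs ! n) = (\<Sum>i=1..n. of_nat ((n+1) choose i) * (-1) ^ (n - i)
                        * fst (xs ! (n - i)) * snd (xs ! (i - 1)))" using nth[of n] by simp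
    qed (rule len)
    then have "Rel n (map \<sigma> xs)" using R[OF len] by simp
    then have e: "snd (\<sigma> (xs ! n)) = (\<Sum>i=1..n. of_nat ((n+1) choose i) * (-1) ^ (n - i)
                        * fst (map \<sigma> xs ! (n - i)) * snd (map \<sigma> xs ! (i - 1)))"
      unfolding Rel_def using len by simp
    have "(\<Sum>i=1..n. of_nat ((n+1) choose i) * (-1) ^ (n - i)
                        * fst (map \<sigma> xs ! (n - i)) * snd (map \<sigma> xs ! (i - 1))) =
          (\<Sum>i=1..n. of_nat ((n+1) choose i) * (-1) ^ (n - i)
                        * \<alpha> ^ (n + 1 - i) * ?F (\<alpha> ^ i))"
    proof (rule sum.cong)
      fix i assume i: "i \<in> {1..n}"
      then have "n - i + 1 = n + 1 - i" "i - 1 + 1 = i" by auto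
      have "n - i < length xs" "i - 1 < length xs" using i len by auto
      have "i - 1 + 1 = i" using i by auto
      moreover have "i - 1 \<le> n" using i by auto
      then have "xs ! (i - 1) = (\<alpha> ^ (i - 1 + 1), 0)" by (rule nth)
      ultimately have "xs ! (i - 1) = (\<alpha> ^ i, 0)" by simp
      moreover have "n + 1 - i = Suc (n - i)" using i by auto
      then show "of_nat ((n+1) choose i) * (-1) ^ (n - i) * fst (map \<sigma> xs ! (n - i)) * snd (map \<sigma> xs ! (i - 1)) =
           of_nat ((n+1) choose i) * (-1) ^ (n - i) * \<alpha> ^ (n + 1 - i) * ?F (\<alpha> ^ i)"
        using i \<open>n - i < length xs\<close> \<open>i - 1 < length xs\<close> by (simp add: p nth)
    qed simp
    then show "?F (\<alpha> ^ (n+1)) = (\<Sum>i=1..n. of_nat ((n+1) choose i) * (-1) ^ (n - i)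
                        * \<alpha> ^ (n + 1 - i) * ?F (\<alpha> ^ i))" using e by (simp add: nth)
  qed
  then show ?thesis using aut_add[OF assms] by (simp add: Dn_def)
qed

definition sigF :: "(complex \<Rightarrow> complex) \<Rightarrow> sortS \<Rightarrow> sortS" where
  "sigF F x = act (F (proj x)) x"

lemma sigF_simp: "sigF F x = (fst x, snd x + F (fst x))" by (simp add: sigF_def act_def proj_def)

lemma additive_neg: "additive_fun F \<Longrightarrow> additive_fun (\<lambda>a. - F a)"
  by (simp add: additive_fun_def)

lemma sigF_AutP:
  assumes F: "F \<in> Dn n"
  shows "sigF F \<in> AutP n"
proof -
  have add: "additive_fun F" and D: "\<And>\<alpha>. F (\<alpha> ^ (n+1)) = (\<Sum>i=1..n. of_nat ((n+1) choose i) * (-1) ^ (n - i)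
                        * \<alpha> ^ (n + 1 - i) * F (\<alpha> ^ i))" using F unfolding Dn_def mem_Collect_eq by blast+
  have b1: "bij (sigF F)"
    by (rule o_bij[of "sigF (\<lambda>a. - F a)"]) (auto simp: sigF_simp fun_eq_iff)
  have b2: "\<forall>x. proj (sigF F x) = proj x" by (simp add: sigF_simp proj_def)
  have b3: "\<forall>x y. sigF F (splus x y) = splus (sigF F x) (sigF F y)"
    using add by (simp add: sigF_simp splus_def additive_fun_def)
  have b4: "\<forall>\<beta> x. sigF F (act \<beta> x) = act \<beta> (sigF F x)"
    by (simp add: sigF_simp act_def)
  have b5: "\<forall>xs. length xs = n + 1 \<longrightarrow> (Rel n xs \<longleftrightarrow> Rel n (map (sigF F) xs))"
  proof (intro allI impI)
    fix xs :: "sortS list" assume len: "length xs = n + 1"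
    have nm: "\<And>j. j < n + 1 \<Longrightarrow> map (sigF F) xs ! j = (fst (xs ! j), snd (xs ! j) + F (fst (xs ! j)))"
      using len by (simp add: sigF_simp)
    let ?a = "fst (xs ! 0)"
    let ?C = "\<forall>i\<in>{1..n+1}. fst (xs ! (i - 1)) = ?a ^ i"
    have C: "(\<forall>i\<in>{1..n+1}. fst (map (sigF F) xs ! (i - 1)) = fst (map (sigF F) xs ! 0) ^ i) \<longleftrightarrow> ?C"
    proof (rule ball_cong[OF refl])
      fix i assume "i \<in> {1..n+1}"
      then have "i - 1 < n + 1" "0 < n + 1" by auto
      then show "(fst (map (sigF F) xs ! (i - 1)) = fst (map (sigF F) xs ! 0) ^ i) \<longleftrightarrow> fst (xs ! (i - 1)) = ?a ^ i"
        by (simp only: nm) simp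
    qed
    have key: "snd (map (sigF F) xs ! n) = (\<Sum>i=1..n. of_nat ((n+1) choose i) * (-1) ^ (n - i)
                        * fst (map (sigF F) xs ! (n - i)) * snd (map (sigF F) xs ! (i - 1)))
        \<longleftrightarrow> snd (xs ! n) = (\<Sum>i=1..n. of_nat ((n+1) choose i) * (-1) ^ (n - i)
                        * fst (xs ! (n - i)) * snd (xs ! (i - 1)))" if c: ?C
    proof -
      have "n + 1 \<in> {1..n+1}" by simp
      then have "fst (xs ! (n + 1 - 1)) = ?a ^ (n+1)" using c by blast
      then have fn: "fst (xs ! n) = ?a ^ (n+1)" by simp
      have fi: "\<And>i. i \<in> {1..n} \<Longrightarrow> fst (xs ! (n - i)) = ?a ^ (n + 1 - i) \<and> fst (xs ! (i - 1)) = ?a ^ i"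
      proof -
        fix i assume i: "i \<in> {1..n}"
        have "n + 1 - i \<in> {1..n+1}" "i \<in> {1..n+1}" using i by auto
        then have c1: "fst (xs ! (n + 1 - i - 1)) = ?a ^ (n + 1 - i)" "fst (xs ! (i - 1)) = ?a ^ i"
          using c by blast+
        have "n + 1 - i - 1 = n - i" by simp
        then show "fst (xs ! (n - i)) = ?a ^ (n + 1 - i) \<and> fst (xs ! (i - 1)) = ?a ^ i"
          using c1 by simp
      qed
      have s1: "(\<Sum>i=1..n. of_nat ((n+1) choose i) * (-1) ^ (n - i)
                        * fst (map (sigF F) xs ! (n - i)) * snd (map (sigF F) xs ! (i - 1))) =
            (\<Sum>i=1..n. of_nat ((n+1) choose i) * (-1) ^ (n - i)
                        * fst (xs ! (n - i)) * snd (xs ! (i - 1))) +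
            (\<Sum>i=1..n. of_nat ((n+1) choose i) * (-1) ^ (n - i)
                        * ?a ^ (n + 1 - i) * F (?a ^ i))"
        unfolding sum.distrib[symmetric]
      proof (rule sum.cong)
        fix i assume i: "i \<in> {1..n}"
        then have "n - i < n + 1" "i - 1 < n + 1" by auto
        then show "of_nat ((n+1) choose i) * (-1) ^ (n - i)
                        * fst (map (sigF F) xs ! (n - i)) * snd (map (sigF F) xs ! (i - 1)) =
            of_nat ((n+1) choose i) * (-1) ^ (n - i) * fst (xs ! (n - i)) * snd (xs ! (i - 1)) +
            of_nat ((n+1) choose i) * (-1) ^ (n - i) * ?a ^ (n + 1 - i) * F (?a ^ i)"
          using fi[OF i] by (simp add: nm algebra_simps)
      qed simp
      show ?thesis unfolding s1 using fn D[of ?a] by (simp add: nm)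
    qed
    let ?E0 = "snd (xs ! n) = (\<Sum>i=1..n. of_nat ((n+1) choose i) * (-1) ^ (n - i)
                        * fst (xs ! (n - i)) * snd (xs ! (i - 1)))"
    let ?E1 = "snd (map (sigF F) xs ! n) = (\<Sum>i=1..n. of_nat ((n+1) choose i) * (-1) ^ (n - i)
                        * fst (map (sigF F) xs ! (n - i)) * snd (map (sigF F) xs ! (i - 1)))"
    let ?C1 = "\<forall>i\<in>{1..n+1}. fst (map (sigF F) xs ! (i - 1)) = fst (map (sigF F) xs ! 0) ^ i"
    have L2: "length (map (sigF F) xs) = n + 1" using len by simp
    have R0: "Rel n xs \<longleftrightarrow> ?C \<and> ?E0" unfolding Rel_def using len by simp
    have R1: "Rel n (map (sigF F) xs) \<longleftrightarrow> ?C1 \<and> ?E1" unfolding Rel_def using L2 by simp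
    show "Rel n xs \<longleftrightarrow> Rel n (map (sigF F) xs)"
      unfolding R0 R1
    proof
      assume A: "?C \<and> ?E0"
      then have c: ?C by (rule conjunct1)
      from A have e: ?E0 by (rule conjunct2)
      show "?C1 \<and> ?E1" using C[THEN iffD2, OF c] key[OF c, THEN iffD2, OF e] by (rule conjI)
    next
      assume A: "?C1 \<and> ?E1"
      then have c1: ?C1 by (rule conjunct1)
      from A have e: ?E1 by (rule conjunct2)
      have c: ?C using C c1 by (rule iffD1)
      show "?C \<and> ?E0" using c key[OF c, THEN iffD1, OF e] by (rule conjI)
    qed
  qed
  show ?thesis unfolding AutP_def mem_Collect_eq by (intro conjI b1 b2 b3 b4 b5)
qed

lemma Fsig_sigF:
  assumes "F \<in> Dn n" shows "Fsig (sigF F) = F"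
proof -
  have "Fsig (sigF F) = (\<lambda>a. snd (sigF F (a, 0)))" using aut_Fsig(1)[OF sigF_AutP[OF assms]] .
  then show ?thesis by (simp add: sigF_simp)
qed

lemma part1: "(\<forall>\<sigma>\<in>AutP n. \<exists>!F. additive_fun F \<and> (\<forall>x. \<sigma> x = act (F (proj x)) x))
       \<and> bij_betw Fsig (AutP n) (Dn n)"
proof
  show "\<forall>\<sigma>\<in>AutP n. \<exists>!F. additive_fun F \<and> (\<forall>x. \<sigma> x = act (F (proj x)) x)"
  proof
    fix \<sigma> assume s: "\<sigma> \<in> AutP n"
    show "\<exists>!F. additive_fun F \<and> (\<forall>x. \<sigma> x = act (F (proj x)) x)"
    proof (rule ex1I[of _ "Fsig \<sigma>"])
      show "additive_fun (Fsig \<sigma>) \<and> (\<forall>x. \<sigma> x = act (Fsig \<sigma> (proj x)) x)"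
        using aut_Fsig(2,3)[OF s] by (rule conjI)
      fix G assume "additive_fun G \<and> (\<forall>x. \<sigma> x = act (G (proj x)) x)"
      then have "G = (\<lambda>a. snd (\<sigma> (a, 0)))" using uniq_F by blast
      then show "G = Fsig \<sigma>" using aut_Fsig(1)[OF s] by simp
    qed
  qed
  show "bij_betw Fsig (AutP n) (Dn n)"
    unfolding bij_betw_def
  proof (intro conjI)
    show "inj_on Fsig (AutP n)"
    proof (rule inj_onI)
      fix \<sigma> \<tau> assume s: "\<sigma> \<in> AutP n" and t: "\<tau> \<in> AutP n" and e: "Fsig \<sigma> = Fsig \<tau>"
      show "\<sigma> = \<tau>" using aut_Fsig(3)[OF s] aut_Fsig(3)[OF t] e by (simp add: fun_eq_iff)
    qed
    show "Fsig ` AutP n = Dn n"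
    proof
      show "Fsig ` AutP n \<subseteq> Dn n" using aut_Fsig(1) aut_Dn by auto
      show "Dn n \<subseteq> Fsig ` AutP n"
      proof
        fix F assume F: "F \<in> Dn n"
        have "F = Fsig (sigF F)" using Fsig_sigF[OF F] by simp
        then show "F \<in> Fsig ` AutP n" using sigF_AutP[OF F] by (rule image_eqI)
      qed
    qed
  qed
qed


lemma alt1:
  assumes "n \<ge> 1"
  shows "(\<Sum>k<n. of_nat (n choose k) * (-1::complex)^(n-1-k)) = 1"
proof -
  have "(\<Sum>k\<le>n. of_nat (n choose k) * (1::complex)^k * (-1)^(n-k)) = (1 + (-1))^n"
    by (rule binomial_ring[symmetric])
  also have "\<dots> = 0" using assms by simp
  finally have z: "(\<Sum>k\<le>n. of_nat (n choose k) * (-1::complex)^(n-k)) = 0" by simp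
  have "(\<Sum>k\<le>n. of_nat (n choose k) * (-1::complex)^(n-k)) =
        (\<Sum>k<n. of_nat (n choose k) * (-1::complex)^(n-k)) + 1"
    by (simp add: lessThan_Suc_atMost[symmetric])
  also have "(\<Sum>k<n. of_nat (n choose k) * (-1::complex)^(n-k)) =
             - (\<Sum>k<n. of_nat (n choose k) * (-1::complex)^(n-1-k))"
    unfolding sum_negf[symmetric]
  proof (rule sum.cong)
    fix k assume "k \<in> {..<n}"
    then have "n - k = Suc (n - 1 - k)" by auto
    then show "of_nat (n choose k) * (-1::complex)^(n-k) = - (of_nat (n choose k) * (-1)^(n-1-k))"
      by simp
  qed simp
  finally show ?thesis using z by (simp add: add_eq_0_iff)
qed

lemma ident:
  assumes "n \<ge> 1"
  shows "(\<Sum>i=1..n. of_nat ((n+1) choose i) * (-1)^(n-i) * of_nat i) = (of_nat (n+1)::complex)"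
proof -
  have "{1..n} = Suc ` {..<n}" by (simp add: image_Suc_lessThan)
  then have "(\<Sum>i=1..n. of_nat ((n+1) choose i) * (-1)^(n-i) * (of_nat i :: complex)) =
     (\<Sum>k<n. of_nat ((n+1) choose Suc k) * (-1)^(n - Suc k) * of_nat (Suc k))"
    by (simp add: sum.reindex)
  also have "\<dots> = (\<Sum>k<n. of_nat (n+1) * (of_nat (n choose k) * (-1)^(n - 1 - k)))"
  proof (rule sum.cong)
    fix k
    have A: "of_nat ((n+1) choose Suc k) * (of_nat (Suc k) :: complex) = of_nat (n+1) * of_nat (n choose k)"
      by (metis Suc_eq_plus1 Suc_times_binomial of_nat_mult mult.commute)
    have B: "n - Suc k = n - 1 - k" by simp
    have "of_nat ((n+1) choose Suc k) * (-1)^(n - Suc k) * (of_nat (Suc k) :: complex) =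
      (of_nat ((n+1) choose Suc k) * (of_nat (Suc k) :: complex)) * (-1)^(n - 1 - k)"
      unfolding B by (simp only: mult_ac)
    also have "\<dots> = of_nat (n+1) * (of_nat (n choose k) * (-1)^(n - 1 - k))"
      unfolding A by (simp only: mult_ac)
    finally show "of_nat ((n+1) choose Suc k) * (-1)^(n - Suc k) * (of_nat (Suc k) :: complex) =
      of_nat (n+1) * (of_nat (n choose k) * (-1)^(n - 1 - k))" .
  qed simp
  also have "\<dots> = of_nat (n+1)" using alt1[OF assms] by (simp add: sum_distrib_left[symmetric])
  finally show ?thesis .
qed

fun pw :: "nat \<Rightarrow> sterm" where
  "pw 0 = SVar 0"
| "pw (Suc k) = STimes (pw k) (SVar 0)"

lemma eval_pw: "evalS eP eS (pw k) = (fst (eS 0) ^ (k+1), of_nat (k+1) * fst (eS 0) ^ k * snd (eS 0))"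
  by (induction k) (auto simp: stimes_def algebra_simps)

fun numt :: "nat \<Rightarrow> pterm" where
  "numt 0 = PVar 0"
| "numt (Suc k) = PAdd (numt k) (PVar 1)"

fun powt :: "pterm \<Rightarrow> nat \<Rightarrow> pterm" where
  "powt t 0 = PVar 1"
| "powt t (Suc k) = PMul (powt t k) t"

lemma eval_numt: "eP 0 = 0 \<Longrightarrow> eP 1 = 1 \<Longrightarrow> evalP eP eS (numt k) = of_nat k"
  by (induction k) auto

lemma eval_powt: "eP 1 = 1 \<Longrightarrow> evalP eP eS (powt t k) = evalP eP eS t ^ k"
  by (induction k) auto

definition termi :: "nat \<Rightarrow> nat \<Rightarrow> pterm" where
  "termi n i = PMul (PMul (PMul (numt ((n+1) choose i)) (powt (PVar 2) (n-i)))
      (powt (PPi (SVar 0)) (n+1-i))) (PVar (2+i))"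

fun sumt :: "nat \<Rightarrow> nat list \<Rightarrow> pterm" where
  "sumt n [] = PVar 0"
| "sumt n (i # is) = PAdd (termi n i) (sumt n is)"

lemma eval_sumt: "eP 0 = 0 \<Longrightarrow> eP 1 = 1 \<Longrightarrow> eP 2 = -1 \<Longrightarrow>
  evalP eP eS (sumt n is) = (\<Sum>i\<leftarrow>is. of_nat ((n+1) choose i) * (-1)^(n-i) * fst (eS 0) ^ (n+1-i) * eP (2+i))"
  by (induction "is") (auto simp: termi_def eval_numt eval_powt proj_def)

definition EqF :: "nat \<Rightarrow> fm" where
  "EqF n = PEq (PVar (3+n)) (sumt n [1..<n+1])"

fun Q :: "nat \<Rightarrow> nat \<Rightarrow> fm" where
  "Q n 0 = EqF n"
| "Q n (Suc k) = ExP (3+k) (Conj (SEq (SVar k) (SAct (PVar (3+k)) (pw k))) (Q n k))"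

definition KK :: fm where
  "KK = Conj (PEq (PAdd (PVar 0) (PVar 0)) (PVar 0))
     (Conj (Conj (PEq (PMul (PVar 1) (PVar 1)) (PVar 1)) (Neg (PEq (PVar 1) (PVar 0))))
        (PEq (PAdd (PVar 2) (PVar 1)) (PVar 0)))"

definition phi :: "nat \<Rightarrow> fm" where
  "phi n = ExP 0 (ExP 1 (ExP 2 (Conj KK (Q n (n+1)))))"

definition EE :: "(nat \<Rightarrow> sortS) \<Rightarrow> nat \<Rightarrow> complex" where
  "EE eS j = snd (eS j) - of_nat (j+1) * fst (eS 0) ^ j * snd (eS 0)"

definition upd :: "(nat \<Rightarrow> sortS) \<Rightarrow> (nat \<Rightarrow> complex) \<Rightarrow> nat \<Rightarrow> nat \<Rightarrow> complex" where
  "upd eS eP k v = (if 3 \<le> v \<and> v < 3 + k then EE eS (v - 3) else eP v)"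

lemma sat_Q: "sat eP eS (Q n k) \<longleftrightarrow>
   (\<forall>j<k. fst (eS j) = fst (eS 0) ^ (j+1)) \<and> sat (upd eS eP k) eS (EqF n)"
proof (induction k arbitrary: eP)
  case 0
  have "upd eS eP 0 = eP" by (rule ext) (auto simp: upd_def)
  then show ?case by simp
next
  case (Suc k)
  have c: "sat (eP(3+k := a)) eS (SEq (SVar k) (SAct (PVar (3+k)) (pw k))) \<longleftrightarrow>
        fst (eS k) = fst (eS 0) ^ (k+1) \<and> a = EE eS k" for a
    by (auto simp: eval_pw act_def EE_def prod_eq_iff)
  have u: "upd eS (eP(3+k := EE eS k)) k = upd eS eP (Suc k)"
    by (auto simp: upd_def fun_eq_iff)
  have "sat eP eS (Q n (Suc k)) \<longleftrightarrow> (\<exists>a. sat (eP(3+k := a)) eS (SEq (SVar k) (SAct (PVar (3+k)) (pw k)))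
        \<and> sat (eP(3+k := a)) eS (Q n k))" by simp
  also have "\<dots> \<longleftrightarrow> fst (eS k) = fst (eS 0) ^ (k+1) \<and> sat (eP(3+k := EE eS k)) eS (Q n k)"
    unfolding c by auto
  also have "\<dots> \<longleftrightarrow> (\<forall>j<Suc k. fst (eS j) = fst (eS 0) ^ (j+1)) \<and> sat (upd eS eP (Suc k)) eS (EqF n)"
    unfolding Suc.IH u by (auto simp: less_Suc_eq)
  finally show ?case .
qed

lemma sat_phi: "sat eP eS (phi n) \<longleftrightarrow>
   (\<forall>j<n+1. fst (eS j) = fst (eS 0) ^ (j+1)) \<and>
   EE eS n = (\<Sum>i=1..n. of_nat ((n+1) choose i) * (-1)^(n-i) * fst (eS 0) ^ (n+1-i) * EE eS (i - 1))"
proof -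
  have K: "sat e eS KK \<longleftrightarrow> e 0 = 0 \<and> e 1 = 1 \<and> e 2 = -1" for e
  proof
    assume "sat e eS KK"
    then have h1: "e 0 + e 0 = e 0" and h2: "e 1 * e 1 = e 1" and h3: "e 1 \<noteq> e 0"
      and h4: "e 2 + e 1 = e 0" unfolding KK_def sat.simps evalP.simps by blast+
    from h1 have z: "e 0 = 0" by simp
    from h2 h3 z have o: "e 1 = 1" by (metis mult_cancel_right1)
    from h4 z o have "e 2 = -1" by (simp add: eq_neg_iff_add_eq_0)
    then show "e 0 = 0 \<and> e 1 = 1 \<and> e 2 = -1" using z o by simp
  next
    assume A: "e 0 = 0 \<and> e 1 = 1 \<and> e 2 = -1"
    then show "sat e eS KK" unfolding KK_def by simp
  qed
  let ?e = "eP(0 := 0, 1 := 1, 2 := -1)"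
  have "sat eP eS (phi n) \<longleftrightarrow> (\<exists>a b c. sat (eP(0 := a, 1 := b, 2 := c)) eS KK \<and>
          sat (eP(0 := a, 1 := b, 2 := c)) eS (Q n (n+1)))"
    unfolding phi_def by (simp only: sat.simps)
  also have "\<dots> \<longleftrightarrow> sat ?e eS (Q n (n+1))"
  proof
    assume "\<exists>a b c. sat (eP(0 := a, 1 := b, 2 := c)) eS KK \<and>
          sat (eP(0 := a, 1 := b, 2 := c)) eS (Q n (n+1))"
    then obtain a b c where k: "sat (eP(0 := a, 1 := b, 2 := c)) eS KK"
      and q: "sat (eP(0 := a, 1 := b, 2 := c)) eS (Q n (n+1))" by blast
    from k have "a = 0 \<and> b = 1 \<and> c = -1" unfolding K by simp
    then show "sat ?e eS (Q n (n+1))" using q by simp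
  next
    assume q: "sat ?e eS (Q n (n+1))"
    have "sat ?e eS KK" unfolding K by simp
    then show "\<exists>a b c. sat (eP(0 := a, 1 := b, 2 := c)) eS KK \<and>
          sat (eP(0 := a, 1 := b, 2 := c)) eS (Q n (n+1))" using q by blast
  qed
  also have "\<dots> \<longleftrightarrow> (\<forall>j<n+1. fst (eS j) = fst (eS 0) ^ (j+1)) \<and> sat (upd eS ?e (n+1)) eS (EqF n)"
    by (rule sat_Q)
  also have "sat (upd eS ?e (n+1)) eS (EqF n) \<longleftrightarrow>
      EE eS n = (\<Sum>i=1..n. of_nat ((n+1) choose i) * (-1)^(n-i) * fst (eS 0) ^ (n+1-i) * EE eS (i - 1))"
  proof -
    let ?u = "upd eS ?e (n+1)"
    have lsum: "(\<Sum>i\<leftarrow>[1..<n+1]. f i) = (\<Sum>i\<in>{1..n}. f i)" for f :: "nat \<Rightarrow> complex"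
      by (simp only: sum_set_upt_conv_sum_list_nat[symmetric] set_upt Suc_eq_plus1[symmetric] atLeastLessThanSuc_atLeastAtMost)
    have u012: "?u 0 = 0" "?u 1 = 1" "?u 2 = -1" by (auto simp: upd_def)
    have un: "?u (3+n) = EE eS n" by (simp add: upd_def)
    have "evalP ?u eS (sumt n [1..<n+1]) =
       (\<Sum>i\<leftarrow>[1..<n+1]. of_nat ((n+1) choose i) * (-1)^(n-i) * fst (eS 0) ^ (n+1-i) * ?u (2+i))"
      by (rule eval_sumt[OF u012])
    also have "\<dots> = (\<Sum>i\<in>{1..n}. of_nat ((n+1) choose i) * (-1)^(n-i) * fst (eS 0) ^ (n+1-i) * ?u (2+i))"
      by (rule lsum)
    also have "\<dots> = (\<Sum>i=1..n. of_nat ((n+1) choose i) * (-1)^(n-i) * fst (eS 0) ^ (n+1-i) * EE eS (i - 1))"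
    proof (rule sum.cong)
      fix i assume "i \<in> {1..n}"
      then have "?u (2+i) = EE eS (i - 1)" by (auto simp: upd_def)
      then show "of_nat ((n+1) choose i) * (-1)^(n-i) * fst (eS 0) ^ (n+1-i) * ?u (2+i) =
          of_nat ((n+1) choose i) * (-1)^(n-i) * fst (eS 0) ^ (n+1-i) * EE eS (i - 1)" by simp
    qed simp
    finally show ?thesis unfolding EqF_def using un by simp
  qed
  finally show ?thesis .
qed

lemma rel_char:
  assumes n: "n \<ge> 1"
  shows "Rel n (map eS [0..<n+1]) \<longleftrightarrow> (\<forall>j<n+1. fst (eS j) = fst (eS 0) ^ (j+1)) \<and>
   EE eS n = (\<Sum>i=1..n. of_nat ((n+1) choose i) * (-1)^(n-i) * fst (eS 0) ^ (n+1-i) * EE eS (i - 1))"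
proof -
  let ?xs = "map eS [0..<n+1]"
  let ?a = "fst (eS 0)"
  have nth: "\<And>j. j < n + 1 \<Longrightarrow> ?xs ! j = eS j" by (simp del: upt_Suc)
  have F: "(\<forall>i\<in>{1..n+1}. fst (?xs ! (i - 1)) = fst (?xs ! 0) ^ i) \<longleftrightarrow>
           (\<forall>j<n+1. fst (eS j) = ?a ^ (j+1))"
  proof
    assume h: "\<forall>i\<in>{1..n+1}. fst (?xs ! (i - 1)) = fst (?xs ! 0) ^ i"
    show "\<forall>j<n+1. fst (eS j) = ?a ^ (j+1)"
    proof (intro allI impI)
      fix j assume j: "j < n + 1"
      have "j + 1 \<in> {1..n+1}" using j by auto
      then have "fst (?xs ! (j + 1 - 1)) = fst (?xs ! 0) ^ (j+1)" using h by blast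
      then show "fst (eS j) = ?a ^ (j+1)" using nth[OF j] nth[of 0] by simp
    qed
  next
    assume h: "\<forall>j<n+1. fst (eS j) = ?a ^ (j+1)"
    show "\<forall>i\<in>{1..n+1}. fst (?xs ! (i - 1)) = fst (?xs ! 0) ^ i"
    proof
      fix i assume i: "i \<in> {1..n+1}"
      then have "i - 1 < n + 1" "i - 1 + 1 = i" by auto
      then have "fst (eS (i - 1)) = ?a ^ (i - 1 + 1)" using h by blast
      then have "fst (eS (i - 1)) = ?a ^ i" using \<open>i - 1 + 1 = i\<close> by simp
      moreover have "?xs ! (i - 1) = eS (i - 1)" by (rule nth) fact
      moreover have "?xs ! 0 = eS 0" by (rule nth) simp
      ultimately show "fst (?xs ! (i - 1)) = fst (?xs ! 0) ^ i" by simp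
    qed
  qed
  have S: "snd (?xs ! n) = (\<Sum>i=1..n. of_nat ((n+1) choose i) * (-1) ^ (n - i)
                        * fst (?xs ! (n - i)) * snd (?xs ! (i - 1))) \<longleftrightarrow>
     EE eS n = (\<Sum>i=1..n. of_nat ((n+1) choose i) * (-1)^(n-i) * ?a ^ (n+1-i) * EE eS (i - 1))"
    if h: "\<forall>j<n+1. fst (eS j) = ?a ^ (j+1)"
  proof -
    let ?c = "\<lambda>i. of_nat ((n+1) choose i) * (-1::complex) ^ (n - i)"
    have s1: "(\<Sum>i=1..n. ?c i * fst (?xs ! (n - i)) * snd (?xs ! (i - 1))) =
              (\<Sum>i=1..n. ?c i * ?a ^ (n+1-i) * snd (eS (i - 1)))"
    proof (rule sum.cong)
      fix i assume i: "i \<in> {1..n}"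
      then have l: "n - i < n + 1" "i - 1 < n + 1" and e: "n - i + 1 = n + 1 - i" by auto
      have "fst (eS (n - i)) = ?a ^ (n - i + 1)" using h l(1) by blast
      then have "fst (eS (n - i)) = ?a ^ (n + 1 - i)" unfolding e .
      then show "?c i * fst (?xs ! (n - i)) * snd (?xs ! (i - 1)) = ?c i * ?a ^ (n+1-i) * snd (eS (i - 1))"
        using nth[OF l(1)] nth[OF l(2)] by simp
    qed simp
    have s2: "(\<Sum>i=1..n. ?c i * ?a ^ (n+1-i) * EE eS (i - 1)) =
              (\<Sum>i=1..n. ?c i * ?a ^ (n+1-i) * snd (eS (i - 1))) -
              (\<Sum>i=1..n. ?c i * of_nat i) * ?a ^ n * snd (eS 0)"
      unfolding sum_distrib_right sum_subtractf[symmetric]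
    proof (rule sum.cong)
      fix i assume i: "i \<in> {1..n}"
      then have "(n + 1 - i) + (i - 1) = n" "i - 1 + 1 = i" by auto
      then have p: "?a ^ (n+1-i) * ?a ^ (i - 1) = ?a ^ n" by (metis power_add)
      have "?c i * ?a ^ (n+1-i) * EE eS (i - 1) =
            ?c i * ?a ^ (n+1-i) * snd (eS (i - 1)) - ?c i * of_nat i * (?a ^ (n+1-i) * ?a ^ (i - 1)) * snd (eS 0)"
        unfolding EE_def using \<open>i - 1 + 1 = i\<close> by (simp add: algebra_simps)
      then show "?c i * ?a ^ (n+1-i) * EE eS (i - 1) =
            ?c i * ?a ^ (n+1-i) * snd (eS (i - 1)) - ?c i * of_nat i * ?a ^ n * snd (eS 0)"
        unfolding p by simp
    qed simp
    have s3: "(\<Sum>i=1..n. ?c i * of_nat i) = of_nat (n+1)" using ident[OF n] by simp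
    show ?thesis
      unfolding s1 nth[of n, OF lessI[of n, unfolded Suc_eq_plus1]] s2 s3
      by (auto simp: EE_def algebra_simps)
  qed
  have L: "length ?xs = n + 1" by simp
  show ?thesis
  proof
    assume R: "Rel n ?xs"
    then have c: "\<forall>i\<in>{1..n+1}. fst (?xs ! (i - 1)) = fst (?xs ! 0) ^ i"
      and e: "snd (?xs ! n) = (\<Sum>i=1..n. of_nat ((n+1) choose i) * (-1) ^ (n - i)
                        * fst (?xs ! (n - i)) * snd (?xs ! (i - 1)))"
      unfolding Rel_def by blast+
    have h: "\<forall>j<n+1. fst (eS j) = ?a ^ (j+1)" using F c by (rule iffD1)
    show "(\<forall>j<n+1. fst (eS j) = ?a ^ (j+1)) \<and>
      EE eS n = (\<Sum>i=1..n. of_nat ((n+1) choose i) * (-1)^(n-i) * ?a ^ (n+1-i) * EE eS (i - 1))"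
      using h S[OF h, THEN iffD1, OF e] by (rule conjI)
  next
    assume A: "(\<forall>j<n+1. fst (eS j) = ?a ^ (j+1)) \<and>
      EE eS n = (\<Sum>i=1..n. of_nat ((n+1) choose i) * (-1)^(n-i) * ?a ^ (n+1-i) * EE eS (i - 1))"
    then have h: "\<forall>j<n+1. fst (eS j) = ?a ^ (j+1)" by (rule conjunct1)
    have e: "EE eS n = (\<Sum>i=1..n. of_nat ((n+1) choose i) * (-1)^(n-i) * ?a ^ (n+1-i) * EE eS (i - 1))"
      using A by (rule conjunct2)
    show "Rel n ?xs" unfolding Rel_def
      using L F[THEN iffD2, OF h] S[OF h, THEN iffD2, OF e] by (intro conjI)
  qed
qed

lemma part2: assumes "n \<ge> 1" shows "\<exists>\<phi>::fm. \<forall>eP eS. sat eP eS \<phi> \<longleftrightarrow> Rel n (map eS [0..<n+1])"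
proof (intro exI allI)
  fix eP eS show "sat eP eS (phi n) \<longleftrightarrow> Rel n (map eS [0..<n+1])"
    by (simp only: sat_phi rel_char[OF assms])
qed


theorem mainTheorem10:
  fixes n :: nat
  assumes "n \<ge> 1"
  shows "(\<forall>\<sigma>\<in>AutP n. \<exists>!F. additive_fun F \<and> (\<forall>x. \<sigma> x = act (F (proj x)) x))
       \<and> bij_betw Fsig (AutP n) (Dn n)
       \<and> (\<exists>\<phi>::fm. \<forall>eP eS. sat eP eS \<phi> \<longleftrightarrow> Rel n (map eS [0..<n+1]))"
proof -
  have P1: "(\<forall>\<sigma>\<in>AutP n. \<exists>!F. additive_fun F \<and> (\<forall>x. \<sigma> x = act (F (proj x)) x))
       \<and> bij_betw Fsig (AutP n) (Dn n)" by (rule part1)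
  have P2: "\<exists>\<phi>::fm. \<forall>eP eS. sat eP eS \<phi> \<longleftrightarrow> Rel n (map eS [0..<n+1])" by (rule part2[OF assms])
  show ?thesis using conjunct1[OF P1] conjunct2[OF P1] P2 by (intro conjI)
qed

end
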